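(* Let $\Phi$ be a point process on $\mathbb{R}^d$ with Radon mean measure $\alpha(\cdot)=\mathbb{E}\Phi(\cdot)$. (i) If $\Phi$ is simple, has Radon second-order factorial moment measure $\alpha^{(2)}$, and $\Pr\{\Phi(B_1)=0,\Phi(B_2)=0\}\le \Pr\{\Phi(B_1)=0\}\Pr\{\Phi(B_2)=0\}$ for any two disjoint bounded Borel sets $B_1,B_2$, then $\Phi$ is $\nu$-weakly sub-Poisson, i.e. $\Pr\{\Phi(B)=0\}\le e^{-\alpha(B)}$ for all bounded Borel $B$. (ii) If $\alpha$ is diffuse (has no atoms) and $\Pr\{\Phi(B_1)=0,\Phi(B_2)=0\}\ge \Pr\{\Phi(B_1)=0\}\Pr\{\Phi(B_2)=0\}$ for any two disjoint bounded Borel sets $B_1,B_2$, then $\Phi$ is $\nu$-weakly super-Poisson, i.e. $\Pr\{\Phi(B)=0\}\ge e^{-\alpha(B)}$ for all bounded Borel $B$.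
   Context: A point process is simple if a.s. $\Phi(\{x\})\le 1$ for all $x$. The second-order factorial moment measure $\alpha^{(2)}$ is the measure on $(\mathbb{R}^d)^2$ with $\alpha^{(2)}(A)=\mathbb{E}\sum_{X\ne Y\in\Phi}\mathbf{1}((X,Y)\in A)$ (sum over ordered pairs of distinct points, counted with multiplicity). *)

theory Defs
  imports "HOL-Probability.Probability"
begin

text \<open>A realisation of a point process on the Euclidean space 'a is represented by its
multiplicity function m :: 'a => nat (m x = number of points of the configuration located at x),
which is locally finite: only finitely many points with nonzero multiplicity in each bounded set.\<close>

definition bdd_borel :: "'a::euclidean_space set \<Rightarrow> bool" where
  "bdd_borel B \<longleftrightarrow> B \<in> sets borel \<and> bounded B"

definition pp_count :: "('w \<Rightarrow> 'a \<Rightarrow> nat) \<Rightarrow> 'w \<Rightarrow> 'a set \<Rightarrow> nat" where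
  "pp_count \<Phi> \<omega> B = (\<Sum>x\<in>{x\<in>B. \<Phi> \<omega> x \<noteq> 0}. \<Phi> \<omega> x)"

definition point_process :: "'w measure \<Rightarrow> ('w \<Rightarrow> 'a::euclidean_space \<Rightarrow> nat) \<Rightarrow> bool" where
  "point_process M \<Phi> \<longleftrightarrow> prob_space M
     \<and> (\<forall>\<omega>\<in>space M. \<forall>B. bounded B \<longrightarrow> finite {x\<in>B. \<Phi> \<omega> x \<noteq> 0})
     \<and> (\<forall>B. bdd_borel B \<longrightarrow> (\<lambda>\<omega>. pp_count \<Phi> \<omega> B) \<in> measurable M (count_space UNIV))"

definition mean_measure :: "'w measure \<Rightarrow> ('w \<Rightarrow> 'a \<Rightarrow> nat) \<Rightarrow> 'a set \<Rightarrow> ennreal" where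
  "mean_measure M \<Phi> B = (\<integral>\<^sup>+\<omega>. of_nat (pp_count \<Phi> \<omega> B) \<partial>M)"

definition radon_mean :: "'w measure \<Rightarrow> ('w \<Rightarrow> 'a::euclidean_space \<Rightarrow> nat) \<Rightarrow> bool" where
  "radon_mean M \<Phi> \<longleftrightarrow> (\<forall>B. bdd_borel B \<longrightarrow> mean_measure M \<Phi> B < \<infinity>)"

definition diffuse_mean :: "'w measure \<Rightarrow> ('w \<Rightarrow> 'a \<Rightarrow> nat) \<Rightarrow> bool" where
  "diffuse_mean M \<Phi> \<longleftrightarrow> (\<forall>x. mean_measure M \<Phi> {x} = 0)"

definition simple_pp :: "'w measure \<Rightarrow> ('w \<Rightarrow> 'a \<Rightarrow> nat) \<Rightarrow> bool" where
  "simple_pp M \<Phi> \<longleftrightarrow> (AE \<omega> in M. \<forall>x. \<Phi> \<omega> x \<le> 1)"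

text \<open>Sum over ordered pairs of distinct points (counted with multiplicity) lying in A:
a point of multiplicity k at x contributes k*(k-1) pairs (x,x); points at x \<noteq> y
with multiplicities k, l contribute k*l pairs (x,y).\<close>
definition pp_count2 :: "('w \<Rightarrow> 'a \<Rightarrow> nat) \<Rightarrow> 'w \<Rightarrow> ('a \<times> 'a) set \<Rightarrow> nat" where
  "pp_count2 \<Phi> \<omega> A =
     (\<Sum>p\<in>{p\<in>A. \<Phi> \<omega> (fst p) \<noteq> 0 \<and> \<Phi> \<omega> (snd p) \<noteq> 0}.
        (if fst p = snd p then \<Phi> \<omega> (fst p) * (\<Phi> \<omega> (fst p) - 1)
         else \<Phi> \<omega> (fst p) * \<Phi> \<omega> (snd p)))"

definition fact_moment2 :: "'w measure \<Rightarrow> ('w \<Rightarrow> 'a \<Rightarrow> nat) \<Rightarrow> ('a \<times> 'a) set \<Rightarrow> ennreal" where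
  "fact_moment2 M \<Phi> A = (\<integral>\<^sup>+\<omega>. of_nat (pp_count2 \<Phi> \<omega> A) \<partial>M)"

definition radon_fact2 :: "'w measure \<Rightarrow> ('w \<Rightarrow> 'a::euclidean_space \<Rightarrow> nat) \<Rightarrow> bool" where
  "radon_fact2 M \<Phi> \<longleftrightarrow> (\<forall>A. bdd_borel A \<longrightarrow> fact_moment2 M \<Phi> A < \<infinity>)"

definition void_prob :: "'w measure \<Rightarrow> ('w \<Rightarrow> 'a \<Rightarrow> nat) \<Rightarrow> 'a set \<Rightarrow> real" where
  "void_prob M \<Phi> B = measure M {\<omega>\<in>space M. pp_count \<Phi> \<omega> B = 0}"

definition void_prob2 :: "'w measure \<Rightarrow> ('w \<Rightarrow> 'a \<Rightarrow> nat) \<Rightarrow> 'a set \<Rightarrow> 'a set \<Rightarrow> real" where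
  "void_prob2 M \<Phi> B1 B2 =
     measure M {\<omega>\<in>space M. pp_count \<Phi> \<omega> B1 = 0 \<and> pp_count \<Phi> \<omega> B2 = 0}"

end

theory Submission
  imports Defs
begin



definition supp :: "('w \<Rightarrow> 'a \<Rightarrow> nat) \<Rightarrow> 'w \<Rightarrow> 'a set \<Rightarrow> 'a set" where
  "supp \<Phi> \<omega> B = {x\<in>B. \<Phi> \<omega> x \<noteq> 0}"

lemma pp_count_supp: "pp_count \<Phi> \<omega> B = (\<Sum>x\<in>supp \<Phi> \<omega> B. \<Phi> \<omega> x)"
  by (simp add: pp_count_def supp_def)

lemma pp_count_0_iff:
  assumes "finite (supp \<Phi> \<omega> B)"
  shows "pp_count \<Phi> \<omega> B = 0 \<longleftrightarrow> (\<forall>x\<in>B. \<Phi> \<omega> x = 0)"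
  using assms by (auto simp: pp_count_supp supp_def)

lemma pp_count_union:
  assumes "finite (supp \<Phi> \<omega> A)" "finite (supp \<Phi> \<omega> B)" "A \<inter> B = {}"
  shows "pp_count \<Phi> \<omega> (A \<union> B) = pp_count \<Phi> \<omega> A + pp_count \<Phi> \<omega> B"
proof -
  have "supp \<Phi> \<omega> (A \<union> B) = supp \<Phi> \<omega> A \<union> supp \<Phi> \<omega> B" by (auto simp: supp_def)
  moreover have "supp \<Phi> \<omega> A \<inter> supp \<Phi> \<omega> B = {}" using assms(3) by (auto simp: supp_def)
  ultimately show ?thesis using assms(1,2) by (simp add: pp_count_supp sum.union_disjoint)
qed

lemma pp_count_single: "pp_count \<Phi> \<omega> {x} = \<Phi> \<omega> x"
proof -
  have "{y\<in>{x}. \<Phi> \<omega> y \<noteq> 0} = (if \<Phi> \<omega> x = 0 then {} else {x})" by auto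
  thus ?thesis by (simp add: pp_count_def)
qed

lemma pp_count_mono:
  assumes "finite (supp \<Phi> \<omega> B)" "A \<subseteq> B"
  shows "pp_count \<Phi> \<omega> A \<le> pp_count \<Phi> \<omega> B"
proof -
  have "supp \<Phi> \<omega> A \<subseteq> supp \<Phi> \<omega> B" using assms(2) by (auto simp: supp_def)
  thus ?thesis using assms(1) by (simp add: pp_count_supp sum_mono2)
qed

lemma pp_count2_eq:
  assumes "finite (supp \<Phi> \<omega> B)"
  shows "real (pp_count2 \<Phi> \<omega> (B \<times> B)) = real (pp_count \<Phi> \<omega> B) * (real (pp_count \<Phi> \<omega> B) - 1)"
proof -
  let ?S = "supp \<Phi> \<omega> B"
  let ?f = "\<lambda>x. real (\<Phi> \<omega> x)"
  have S: "{p\<in>B \<times> B. \<Phi> \<omega> (fst p) \<noteq> 0 \<and> \<Phi> \<omega> (snd p) \<noteq> 0} = ?S \<times> ?S"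
    by (auto simp: supp_def)
  have "real (pp_count2 \<Phi> \<omega> (B \<times> B)) =
     (\<Sum>p\<in>?S \<times> ?S. (?f (fst p) * ?f (snd p) - (if fst p = snd p then ?f (fst p) else 0)))"
    unfolding pp_count2_def S of_nat_sum
  proof (rule sum.cong[OF refl])
    fix p assume p: "p \<in> ?S \<times> ?S"
    hence "\<Phi> \<omega> (fst p) \<ge> 1" by (auto simp: supp_def)
    thus "real (if fst p = snd p then \<Phi> \<omega> (fst p) * (\<Phi> \<omega> (fst p) - 1) else \<Phi> \<omega> (fst p) * \<Phi> \<omega> (snd p))
       = ?f (fst p) * ?f (snd p) - (if fst p = snd p then ?f (fst p) else 0)"
      by (auto simp: of_nat_diff algebra_simps)
  qed
  also have "\<dots> = (\<Sum>p\<in>?S \<times> ?S. ?f (fst p) * ?f (snd p)) - (\<Sum>p\<in>?S \<times> ?S. (if fst p = snd p then ?f (fst p) else 0))"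
    by (simp add: sum_subtractf)
  also have "(\<Sum>p\<in>?S \<times> ?S. ?f (fst p) * ?f (snd p)) = (\<Sum>x\<in>?S. ?f x) * (\<Sum>x\<in>?S. ?f x)"
    by (simp add: sum_product sum.cartesian_product case_prod_unfold)
  also have "(\<Sum>p\<in>?S \<times> ?S. (if fst p = snd p then ?f (fst p) else 0)) = (\<Sum>x\<in>?S. \<Sum>y\<in>?S. (if x = y then ?f x else 0))"
    by (simp add: sum.cartesian_product case_prod_unfold)
  also have "\<dots> = (\<Sum>x\<in>?S. ?f x)"
    using assms by (simp add: sum.delta)
  finally show ?thesis by (simp add: pp_count_supp algebra_simps)
qed

locale ppc =
  fixes M :: "'w measure" and \<Phi> :: "'w \<Rightarrow> 'a::euclidean_space \<Rightarrow> nat"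
  assumes pp: "point_process M \<Phi>" and rm: "radon_mean M \<Phi>"
begin

lemma ps: "prob_space M" using pp by (simp add: point_process_def)

lemma fin: "\<omega> \<in> space M \<Longrightarrow> bounded B \<Longrightarrow> finite (supp \<Phi> \<omega> B)"
  using pp by (simp add: point_process_def supp_def)

lemma meas: "bdd_borel B \<Longrightarrow> (\<lambda>\<omega>. pp_count \<Phi> \<omega> B) \<in> measurable M (count_space UNIV)"
  using pp by (simp add: point_process_def)

lemma meas_real: "bdd_borel B \<Longrightarrow> (\<lambda>\<omega>. g (pp_count \<Phi> \<omega> B) :: real) \<in> borel_measurable M"
  by (rule measurable_compose[OF meas]) auto

lemma meas_set: "bdd_borel B \<Longrightarrow> {\<omega>\<in>space M. pp_count \<Phi> \<omega> B = 0} \<in> sets M"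
proof -
  assume b: "bdd_borel B"
  have "{\<omega>\<in>space M. pp_count \<Phi> \<omega> B = 0} = (\<lambda>\<omega>. pp_count \<Phi> \<omega> B) -` {0} \<inter> space M" by auto
  thus ?thesis using measurable_sets[OF meas[OF b]] by auto
qed

lemma integrable_N: "bdd_borel B \<Longrightarrow> integrable M (\<lambda>\<omega>. real (pp_count \<Phi> \<omega> B))"
proof -
  assume b: "bdd_borel B"
  have "(\<integral>\<^sup>+\<omega>. ennreal (norm (real (pp_count \<Phi> \<omega> B))) \<partial>M) = mean_measure M \<Phi> B"
    by (simp add: mean_measure_def ennreal_of_nat_eq_real_of_nat)
  also have "\<dots> < \<infinity>" using rm b by (simp add: radon_mean_def)
  finally show ?thesis by (intro integrableI_bounded meas_real b)
qed

lemma integral_N: "bdd_borel B \<Longrightarrow> (\<integral>\<omega>. real (pp_count \<Phi> \<omega> B) \<partial>M) = enn2real (mean_measure M \<Phi> B)"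
  by (subst integral_eq_nn_integral) (auto intro: meas_real simp: mean_measure_def ennreal_of_nat_eq_real_of_nat)

lemma void_integral: "bdd_borel B \<Longrightarrow>
  void_prob M \<Phi> B = (\<integral>\<omega>. indicator {\<omega>\<in>space M. pp_count \<Phi> \<omega> B = 0} \<omega> \<partial>M)"
  by (simp add: void_prob_def Int_absorb2)

lemma integrable_ind: "bdd_borel B \<Longrightarrow> integrable M (\<lambda>\<omega>. indicat_real {\<omega>\<in>space M. pp_count \<Phi> \<omega> B = 0} \<omega>)"
  using ps meas_set by (intro integrable_real_indicator) (auto simp: prob_space_def finite_measure.emeasure_finite less_top[symmetric])

lemma void_nonneg: "void_prob M \<Phi> B \<ge> 0" by (simp add: void_prob_def)

lemma void2_union: "bounded B1 \<Longrightarrow> bounded B2 \<Longrightarrow> void_prob2 M \<Phi> B1 B2 = void_prob M \<Phi> (B1 \<union> B2)"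
proof -
  assume b: "bounded B1" "bounded B2"
  have "{\<omega>\<in>space M. pp_count \<Phi> \<omega> B1 = 0 \<and> pp_count \<Phi> \<omega> B2 = 0} = {\<omega>\<in>space M. pp_count \<Phi> \<omega> (B1 \<union> B2) = 0}"
    using b fin[of _ B1] fin[of _ B2] fin[of _ "B1 \<union> B2"] by (auto simp: pp_count_0_iff)
  thus ?thesis by (simp add: void_prob_def void_prob2_def)
qed

lemma void_empty: "void_prob M \<Phi> {} = 1"
  using ps by (simp add: void_prob_def pp_count_def prob_space.prob_space)

end



lemma partition_exists:
  fixes B :: "'a::euclidean_space set" and r :: "'a \<Rightarrow> real"
  assumes "bounded B" "B \<in> sets borel" "\<And>x. r x > 0"
  shows "\<exists>(k::nat) P c. (\<forall>i<k. P i \<subseteq> B \<inter> ball (c i) (r (c i))) \<and> (\<forall>i<k. P i \<in> sets borel)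
     \<and> (\<forall>i<k. \<forall>j<k. i \<noteq> j \<longrightarrow> P i \<inter> P j = {}) \<and> (\<Union>i<k. P i) = B"
proof -
  have cp: "compact (closure B)" using assms(1) by (simp add: compact_closure)
  have cx: "x \<in> ball x (r x)" for x using assms(3)[of x] by simp
  have cov: "closure B \<subseteq> \<Union> ((\<lambda>x. ball x (r x)) ` closure B)" using cx by blast
  obtain C where C: "C \<subseteq> closure B" "finite C" "closure B \<subseteq> \<Union> ((\<lambda>x. ball x (r x)) ` C)"
    using compactE_image[OF cp _ cov] by auto
  obtain xs where xs: "set xs = C" using finite_list[OF C(2)] by auto
  define c where "c = (\<lambda>i. xs ! i)"
  define k where "k = length xs"
  define U where "U = (\<lambda>i. ball (c i) (r (c i)))"
  define P where "P = (\<lambda>i. B \<inter> U i - (\<Union>j<i. U j))"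
  have 1: "\<forall>i<k. P i \<subseteq> B \<inter> ball (c i) (r (c i))" unfolding P_def U_def by blast
  have 2: "\<forall>i<k. P i \<in> sets borel"
  proof (intro allI impI)
    fix i
    have "open (\<Union>j<i. U j)" unfolding U_def by (intro open_UN) auto
    moreover have "open (U i)" unfolding U_def by auto
    ultimately show "P i \<in> sets borel" unfolding P_def using assms(2)
      by (intro sets.Diff sets.Int) (auto intro: borel_open)
  qed
  have dj: "P i \<inter> P j = {}" if "i < j" for i j
  proof -
    have "P i \<subseteq> U i" unfolding P_def by blast
    moreover have "P j \<inter> U i = {}" unfolding P_def using that by blast
    ultimately show ?thesis by blast
  qed
  have 3: "\<forall>i<k. \<forall>j<k. i \<noteq> j \<longrightarrow> P i \<inter> P j = {}"
  proof (intro allI impI)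
    fix i j assume "i < k" "j < k" "i \<noteq> j"
    hence "i < j \<or> j < i" by arith
    thus "P i \<inter> P j = {}" using dj[of i j] dj[of j i] by blast
  qed
  have 4: "(\<Union>i<k. P i) = B"
  proof
    show "(\<Union>i<k. P i) \<subseteq> B" unfolding P_def by blast
  next
    show "B \<subseteq> (\<Union>i<k. P i)"
    proof
      fix x assume x: "x \<in> B"
      hence "x \<in> closure B" using closure_subset by blast
      then obtain y where y: "y \<in> C" "x \<in> ball y (r y)" using C(3) by blast
      then obtain i where i: "i < k" "c i = y" using xs unfolding c_def k_def by (metis in_set_conv_nth)
      have xi: "x \<in> U i" using i y unfolding U_def by simp
      define i0 where "i0 = (LEAST i. x \<in> U i)"
      have a: "x \<in> U i0" unfolding i0_def by (rule LeastI[of _ i]) (rule xi)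
      have b: "i0 \<le> i" unfolding i0_def by (rule Least_le) (rule xi)
      have c: "x \<notin> U j" if "j < i0" for j unfolding i0_def using not_less_Least that i0_def by blast
      have "x \<in> P i0" using a c x unfolding P_def by blast
      moreover have "i0 < k" using b i by simp
      ultimately show "x \<in> (\<Union>i<k. P i)" by blast
    qed
  qed
  show ?thesis using 1 2 3 4 by blast
qed
context ppc begin

lemma N_sum:
  fixes k :: nat
  assumes "\<omega> \<in> space M" "\<forall>i<k. bounded (P i)" "\<forall>i<k. \<forall>j<k. i \<noteq> j \<longrightarrow> P i \<inter> P j = {}"
  shows "pp_count \<Phi> \<omega> (\<Union>i<k. P i) = (\<Sum>i<k. pp_count \<Phi> \<omega> (P i))"
  using assms(2,3)
proof (induction k)
  case 0 thus ?case by (simp add: pp_count_def)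
next
  case (Suc k)
  have u: "(\<Union>i<Suc k. P i) = (\<Union>i<k. P i) \<union> P k" by (auto simp: lessThan_Suc)
  have bd: "bounded (\<Union>i<k. P i)" using Suc.prems by (intro bounded_UN) auto
  have d: "(\<Union>i<k. P i) \<inter> P k = {}"
  proof -
    have "P i \<inter> P k = {}" if "i < k" for i
    proof -
      have "i < Suc k" "k < Suc k" "i \<noteq> k" using that by auto
      thus ?thesis using Suc.prems(2) by blast
    qed
    thus ?thesis by blast
  qed
  have "pp_count \<Phi> \<omega> (\<Union>i<Suc k. P i) = pp_count \<Phi> \<omega> (\<Union>i<k. P i) + pp_count \<Phi> \<omega> (P k)"
    unfolding u using fin[OF assms(1) bd] fin[OF assms(1)] Suc.prems d by (intro pp_count_union) auto
  thus ?case using Suc by simp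
qed

lemma bdd_borel_UN:
  fixes k :: nat
  assumes "\<forall>i<k. bdd_borel (P i)"
  shows "bdd_borel (\<Union>i<k. P i)"
proof -
  have "(\<Union>i<k. P i) \<in> sets borel" using assms unfolding bdd_borel_def by (intro sets.finite_UN) auto
  moreover have "bounded (\<Union>i<k. P i)" using assms unfolding bdd_borel_def by (intro bounded_UN) auto
  ultimately show ?thesis by (simp add: bdd_borel_def)
qed

lemma void_prod_ge:
  assumes assoc: "\<forall>B1 B2. bdd_borel B1 \<longrightarrow> bdd_borel B2 \<longrightarrow> B1 \<inter> B2 = {} \<longrightarrow>
              void_prob2 M \<Phi> B1 B2 \<ge> void_prob M \<Phi> B1 * void_prob M \<Phi> B2"
  and "\<forall>i<(k::nat). bdd_borel (P i)" "\<forall>i<k. \<forall>j<k. i \<noteq> j \<longrightarrow> P i \<inter> P j = {}"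
  shows "void_prob M \<Phi> (\<Union>i<k. P i) \<ge> (\<Prod>i<k. void_prob M \<Phi> (P i))"
  using assms(2,3)
proof (induction k)
  case 0 thus ?case by (simp add: void_empty)
next
  case (Suc k)
  have u: "(\<Union>i<Suc k. P i) = (\<Union>i<k. P i) \<union> P k" by (auto simp: lessThan_Suc)
  have bd: "bdd_borel (\<Union>i<k. P i)" using Suc.prems by (intro bdd_borel_UN) auto
  have d: "(\<Union>i<k. P i) \<inter> P k = {}"
  proof -
    have "P i \<inter> P k = {}" if "i < k" for i
    proof -
      have "i < Suc k" "k < Suc k" "i \<noteq> k" using that by auto
      thus ?thesis using Suc.prems(2) by blast
    qed
    thus ?thesis by blast
  qed
  have bk: "bdd_borel (P k)" using Suc.prems by auto
  have "void_prob M \<Phi> (\<Union>i<Suc k. P i) = void_prob2 M \<Phi> (\<Union>i<k. P i) (P k)"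
    unfolding u using bd bk by (simp add: void2_union bdd_borel_def)
  also have "\<dots> \<ge> void_prob M \<Phi> (\<Union>i<k. P i) * void_prob M \<Phi> (P k)"
    using assoc bd bk d by blast
  finally have "void_prob M \<Phi> (\<Union>i<Suc k. P i) \<ge> void_prob M \<Phi> (\<Union>i<k. P i) * void_prob M \<Phi> (P k)" .
  moreover have "void_prob M \<Phi> (\<Union>i<k. P i) * void_prob M \<Phi> (P k) \<ge> (\<Prod>i<k. void_prob M \<Phi> (P i)) * void_prob M \<Phi> (P k)"
    using Suc by (intro mult_right_mono void_nonneg) auto
  ultimately show ?case by simp
qed

lemma void_prod_le:
  assumes assoc: "\<forall>B1 B2. bdd_borel B1 \<longrightarrow> bdd_borel B2 \<longrightarrow> B1 \<inter> B2 = {} \<longrightarrow>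
              void_prob2 M \<Phi> B1 B2 \<le> void_prob M \<Phi> B1 * void_prob M \<Phi> B2"
  and "\<forall>i<(k::nat). bdd_borel (P i)" "\<forall>i<k. \<forall>j<k. i \<noteq> j \<longrightarrow> P i \<inter> P j = {}"
  shows "void_prob M \<Phi> (\<Union>i<k. P i) \<le> (\<Prod>i<k. void_prob M \<Phi> (P i))"
  using assms(2,3)
proof (induction k)
  case 0 thus ?case by (simp add: void_empty)
next
  case (Suc k)
  have u: "(\<Union>i<Suc k. P i) = (\<Union>i<k. P i) \<union> P k" by (auto simp: lessThan_Suc)
  have bd: "bdd_borel (\<Union>i<k. P i)" using Suc.prems by (intro bdd_borel_UN) auto
  have d: "(\<Union>i<k. P i) \<inter> P k = {}"
  proof -
    have "P i \<inter> P k = {}" if "i < k" for i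
    proof -
      have "i < Suc k" "k < Suc k" "i \<noteq> k" using that by auto
      thus ?thesis using Suc.prems(2) by blast
    qed
    thus ?thesis by blast
  qed
  have bk: "bdd_borel (P k)" using Suc.prems by auto
  have "void_prob M \<Phi> (\<Union>i<Suc k. P i) = void_prob2 M \<Phi> (\<Union>i<k. P i) (P k)"
    unfolding u using bd bk by (simp add: void2_union bdd_borel_def)
  also have "\<dots> \<le> void_prob M \<Phi> (\<Union>i<k. P i) * void_prob M \<Phi> (P k)"
    using assoc bd bk d by blast
  also have "\<dots> \<le> (\<Prod>i<k. void_prob M \<Phi> (P i)) * void_prob M \<Phi> (P k)"
    using Suc by (intro mult_right_mono void_nonneg) auto
  finally show ?case by simp
qed

end



context ppc begin

lemma bdd_borel_sub_ball: "bdd_borel B \<Longrightarrow> bdd_borel (B \<inter> ball x r)"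
  unfolding bdd_borel_def by (auto intro: bounded_Int)

lemma sum_alpha:
  fixes k :: nat
  assumes "\<forall>i<k. bdd_borel (P i)" "\<forall>i<k. \<forall>j<k. i \<noteq> j \<longrightarrow> P i \<inter> P j = {}" "(\<Union>i<k. P i) = B"
  shows "(\<Sum>i<k. enn2real (mean_measure M \<Phi> (P i))) = enn2real (mean_measure M \<Phi> B)"
proof -
  have bB: "bdd_borel B" using bdd_borel_UN[OF assms(1)] assms(3) by simp
  have "(\<Sum>i<k. enn2real (mean_measure M \<Phi> (P i))) = (\<Sum>i<k. \<integral>\<omega>. real (pp_count \<Phi> \<omega> (P i)) \<partial>M)"
    using assms(1) by (simp add: integral_N)
  also have "\<dots> = (\<integral>\<omega>. (\<Sum>i<k. real (pp_count \<Phi> \<omega> (P i))) \<partial>M)"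
    using assms(1) by (intro Bochner_Integration.integral_sum[symmetric] integrable_N) auto
  also have "\<dots> = (\<integral>\<omega>. real (pp_count \<Phi> \<omega> B) \<partial>M)"
  proof (rule Bochner_Integration.integral_cong[OF refl])
    fix \<omega> assume "\<omega> \<in> space M"
    hence "pp_count \<Phi> \<omega> (\<Union>i<k. P i) = (\<Sum>i<k. pp_count \<Phi> \<omega> (P i))"
      using assms(1,2) by (intro N_sum) (auto simp: bdd_borel_def)
    thus "(\<Sum>i<k. real (pp_count \<Phi> \<omega> (P i))) = real (pp_count \<Phi> \<omega> B)" using assms(3) by simp
  qed
  also have "\<dots> = enn2real (mean_measure M \<Phi> B)" using bB by (simp add: integral_N)
  finally show ?thesis .
qed

lemma void_ge: "bdd_borel P \<Longrightarrow> 1 - enn2real (mean_measure M \<Phi> P) \<le> void_prob M \<Phi> P"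
proof -
  assume b: "bdd_borel P"
  have "(\<integral>\<omega>. (1 - real (pp_count \<Phi> \<omega> P)) \<partial>M) \<le> (\<integral>\<omega>. indicator {\<omega>\<in>space M. pp_count \<Phi> \<omega> P = 0} \<omega> \<partial>M)"
  proof (rule integral_mono)
    show "integrable M (\<lambda>\<omega>. 1 - real (pp_count \<Phi> \<omega> P))"
      using b ps by (intro Bochner_Integration.integrable_diff integrable_N) (auto simp: prob_space_def finite_measure.integrable_const)
    show "integrable M (indicat_real {\<omega> \<in> space M. pp_count \<Phi> \<omega> P = 0})" using b by (rule integrable_ind)
    fix \<omega> assume "\<omega> \<in> space M"
    thus "1 - real (pp_count \<Phi> \<omega> P) \<le> indicat_real {\<omega> \<in> space M. pp_count \<Phi> \<omega> P = 0} \<omega>"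
      by (cases "pp_count \<Phi> \<omega> P = 0") (auto simp: indicator_def)
  qed
  moreover have "(\<integral>\<omega>. (1 - real (pp_count \<Phi> \<omega> P)) \<partial>M) = 1 - enn2real (mean_measure M \<Phi> P)"
    using b ps by (subst Bochner_Integration.integral_diff)
       (auto intro: integrable_N simp: integral_N prob_space_def finite_measure.integrable_const prob_space.prob_space)
  ultimately show ?thesis using b by (simp add: void_integral)
qed

lemma small_ball:
  assumes dif: "diffuse_mean M \<Phi>" and b: "bdd_borel B" and e: "\<epsilon> > 0"
  shows "\<exists>r>0. enn2real (mean_measure M \<Phi> (B \<inter> ball x r)) < \<epsilon>"
proof -
  define \<rho> where "\<rho> = (\<lambda>n::nat. inverse (real (Suc n)))"
  have \<rho>pos: "\<rho> n > 0" for n by (simp add: \<rho>_def)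
  have \<rho>lim: "\<rho> \<longlonglongrightarrow> 0" unfolding \<rho>_def by (rule LIMSEQ_inverse_real_of_nat)
  define s where "s = (\<lambda>n \<omega>. real (pp_count \<Phi> \<omega> (B \<inter> ball x (\<rho> n))))"
  have bx: "bdd_borel {x}" by (simp add: bdd_borel_def)
  have "(\<integral>\<^sup>+\<omega>. of_nat (pp_count \<Phi> \<omega> {x}) \<partial>M) = 0"
    using dif by (simp add: diffuse_mean_def mean_measure_def)
  hence ae0: "AE \<omega> in M. (of_nat (pp_count \<Phi> \<omega> {x}) :: ennreal) = 0"
    by (subst (asm) nn_integral_0_iff_AE) (auto intro: measurable_compose[OF meas[OF bx]])
  have conv: "AE \<omega> in M. (\<lambda>n. s n \<omega>) \<longlonglongrightarrow> 0"
    using ae0 AE_space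
  proof (eventually_elim)
    case (elim \<omega>)
    have \<omega>x: "\<Phi> \<omega> x = 0" using elim by (simp add: pp_count_single)
    have sp: "\<omega> \<in> space M" using elim by simp
    show ?case
    proof -
      let ?S = "supp \<Phi> \<omega> B"
      have fS: "finite ?S" using fin[OF sp] b by (simp add: bdd_borel_def)
      have "\<forall>y\<in>?S. eventually (\<lambda>n. \<rho> n < dist x y) sequentially"
      proof
        fix y assume "y \<in> ?S"
        hence "y \<noteq> x" using \<omega>x by (auto simp: supp_def)
        hence "dist x y > 0" by simp
        thus "eventually (\<lambda>n. \<rho> n < dist x y) sequentially" using order_tendstoD(2)[OF \<rho>lim] by blast
      qed
      hence ev: "eventually (\<lambda>n. \<forall>y\<in>?S. \<rho> n < dist x y) sequentially"
        by (rule eventually_ball_finite[OF fS])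
      have "eventually (\<lambda>n. s n \<omega> = 0) sequentially"
        using ev
      proof eventually_elim
        case (elim n)
        have fS': "finite (supp \<Phi> \<omega> (B \<inter> ball x (\<rho> n)))"
          using fin[OF sp] b by (simp add: bdd_borel_def bounded_Int)
        have "\<forall>z\<in>B \<inter> ball x (\<rho> n). \<Phi> \<omega> z = 0"
        proof
          fix z assume z: "z \<in> B \<inter> ball x (\<rho> n)"
          show "\<Phi> \<omega> z = 0"
          proof (rule ccontr)
            assume "\<Phi> \<omega> z \<noteq> 0"
            hence "z \<in> ?S" using z by (simp add: supp_def)
            hence "\<rho> n < dist x z" using elim by blast
            moreover have "dist x z < \<rho> n" using z by simp
            ultimately show False by simp
          qed
        qed
        thus ?case using pp_count_0_iff[OF fS'] by (simp add: s_def)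
      qed
      thus ?thesis by (rule tendsto_eventually)
    qed
  qed
  have lim: "(\<lambda>n. \<integral>\<omega>. s n \<omega> \<partial>M) \<longlonglongrightarrow> (\<integral>\<omega>. 0 \<partial>M)"
  proof (rule integral_dominated_convergence[where w = "\<lambda>\<omega>. real (pp_count \<Phi> \<omega> B)"])
    show "(\<lambda>\<omega>. 0::real) \<in> borel_measurable M" by simp
    show "s n \<in> borel_measurable M" for n unfolding s_def by (intro meas_real bdd_borel_sub_ball b)
    show "integrable M (\<lambda>\<omega>. real (pp_count \<Phi> \<omega> B))" using b by (rule integrable_N)
    show "AE \<omega> in M. (\<lambda>n. s n \<omega>) \<longlonglongrightarrow> 0" by (rule conv)
    show "AE \<omega> in M. norm (s n \<omega>) \<le> real (pp_count \<Phi> \<omega> B)" for n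
    proof (rule AE_I2)
      fix \<omega> assume "\<omega> \<in> space M"
      thus "norm (s n \<omega>) \<le> real (pp_count \<Phi> \<omega> B)"
      proof -
        have fB: "finite (supp \<Phi> \<omega> B)" using fin[OF \<open>\<omega> \<in> space M\<close>] b by (simp add: bdd_borel_def)
        have "pp_count \<Phi> \<omega> (B \<inter> ball x (\<rho> n)) \<le> pp_count \<Phi> \<omega> B" by (rule pp_count_mono[OF fB]) auto
        thus ?thesis by (simp add: s_def)
      qed
    qed
  qed
  hence "eventually (\<lambda>n. (\<integral>\<omega>. s n \<omega> \<partial>M) < \<epsilon>) sequentially"
    using e by (intro order_tendstoD(2)[OF lim]) simp
  then obtain n where "(\<integral>\<omega>. s n \<omega> \<partial>M) < \<epsilon>" using eventually_sequentially by auto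
  hence "enn2real (mean_measure M \<Phi> (B \<inter> ball x (\<rho> n))) < \<epsilon>"
    using integral_N[OF bdd_borel_sub_ball[OF b]] by (simp add: s_def)
  thus ?thesis using \<rho>pos by blast
qed

end



context ppc begin

lemma exp_le_one_minus:
  fixes t e :: real
  assumes "0 \<le> t" "t \<le> e" "e \<le> 1/2"
  shows "exp (- (1 + 2 * e) * t) \<le> 1 - t"
proof -
  have "t * t \<le> e * t" using assms by (intro mult_right_mono) auto
  hence "- (1 + 2 * e) * t \<le> - t - 2 * t\<^sup>2" by (simp add: algebra_simps power2_eq_square)
  also have "\<dots> \<le> ln (1 - t)" using assms by (intro ln_one_minus_pos_lower_bound) auto
  finally have "exp (- (1 + 2 * e) * t) \<le> exp (ln (1 - t))" by simp
  also have "\<dots> = 1 - t" using assms by simp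
  finally show ?thesis .
qed

lemma part_ii:
  assumes dif: "diffuse_mean M \<Phi>"
    and assoc: "\<forall>B1 B2. bdd_borel B1 \<longrightarrow> bdd_borel B2 \<longrightarrow> B1 \<inter> B2 = {} \<longrightarrow>
              void_prob2 M \<Phi> B1 B2 \<ge> void_prob M \<Phi> B1 * void_prob M \<Phi> B2"
    and b: "bdd_borel B"
  shows "void_prob M \<Phi> B \<ge> exp (- enn2real (mean_measure M \<Phi> B))"
proof -
  define a where "a = enn2real (mean_measure M \<Phi> B)"
  have key: "exp (- (1 + 2 * e) * a) \<le> void_prob M \<Phi> B" if e: "0 < e" "e \<le> 1/2" for e
  proof -
    define r where "r = (\<lambda>x. SOME r. r > 0 \<and> enn2real (mean_measure M \<Phi> (B \<inter> ball x r)) < e)"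
    have r: "r x > 0 \<and> enn2real (mean_measure M \<Phi> (B \<inter> ball x (r x))) < e" for x
      using someI_ex[OF small_ball[OF dif b e(1)]] unfolding r_def .
    obtain k :: nat and P c where P: "\<forall>i<k. P i \<subseteq> B \<inter> ball (c i) (r (c i))" "\<forall>i<k. P i \<in> sets borel"
      "\<forall>i<k. \<forall>j<k. i \<noteq> j \<longrightarrow> P i \<inter> P j = {}" "(\<Union>i<k. P i) = B"
    proof -
      have rp: "\<And>x. r x > 0" using r by blast
      have bB: "bounded B" "B \<in> sets borel" using b by (auto simp: bdd_borel_def)
      have "\<exists>(k::nat) P c. (\<forall>i<k. P i \<subseteq> B \<inter> ball (c i) (r (c i))) \<and> (\<forall>i<k. P i \<in> sets borel)
     \<and> (\<forall>i<k. \<forall>j<k. i \<noteq> j \<longrightarrow> P i \<inter> P j = {}) \<and> (\<Union>i<k. P i) = B"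
        by (rule partition_exists[OF bB rp])
      then show ?thesis using that by blast
    qed
    have bP: "\<forall>i<k. bdd_borel (P i)"
    proof (intro allI impI)
      fix i assume i: "i < k"
      have "bounded (P i)" using P(1) i b bounded_subset[of B "P i"] by (auto simp: bdd_borel_def)
      thus "bdd_borel (P i)" using P(2) i by (simp add: bdd_borel_def)
    qed
    have small: "enn2real (mean_measure M \<Phi> (P i)) \<le> e" if i: "i < k" for i
    proof -
      have bb: "bdd_borel (B \<inter> ball (c i) (r (c i)))" by (rule bdd_borel_sub_ball[OF b])
      have "enn2real (mean_measure M \<Phi> (P i)) = (\<integral>\<omega>. real (pp_count \<Phi> \<omega> (P i)) \<partial>M)"
        using bP i by (simp add: integral_N)
      also have "\<dots> \<le> (\<integral>\<omega>. real (pp_count \<Phi> \<omega> (B \<inter> ball (c i) (r (c i)))) \<partial>M)"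
      proof (rule integral_mono)
        show "integrable M (\<lambda>\<omega>. real (pp_count \<Phi> \<omega> (P i)))" using bP i by (simp add: integrable_N)
        show "integrable M (\<lambda>\<omega>. real (pp_count \<Phi> \<omega> (B \<inter> ball (c i) (r (c i)))))" using bb by (rule integrable_N)
        fix \<omega> assume "\<omega> \<in> space M"
        hence "finite (supp \<Phi> \<omega> (B \<inter> ball (c i) (r (c i))))" using fin bb by (simp add: bdd_borel_def)
        thus "real (pp_count \<Phi> \<omega> (P i)) \<le> real (pp_count \<Phi> \<omega> (B \<inter> ball (c i) (r (c i))))"
          using P(1) i by (simp add: pp_count_mono)
      qed
      also have "\<dots> = enn2real (mean_measure M \<Phi> (B \<inter> ball (c i) (r (c i))))" using bb by (rule integral_N)
      also have "\<dots> \<le> e" using r[of "c i"] by simp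
      finally show ?thesis .
    qed
    have "exp (- (1 + 2 * e) * a) = exp (\<Sum>i<k. - (1 + 2 * e) * enn2real (mean_measure M \<Phi> (P i)))"
      using sum_alpha[OF bP P(3,4)] by (simp add: a_def sum_distrib_left[symmetric])
    also have "\<dots> = (\<Prod>i<k. exp (- (1 + 2 * e) * enn2real (mean_measure M \<Phi> (P i))))"
      by (simp add: exp_sum)
    also have "\<dots> \<le> (\<Prod>i<k. void_prob M \<Phi> (P i))"
    proof (rule prod_mono)
      fix i assume "i \<in> {..<k}"
      hence i: "i < k" by simp
      have "exp (- (1 + 2 * e) * enn2real (mean_measure M \<Phi> (P i))) \<le> 1 - enn2real (mean_measure M \<Phi> (P i))"
        using small[OF i] e by (intro exp_le_one_minus) auto
      also have "\<dots> \<le> void_prob M \<Phi> (P i)" using bP i by (simp add: void_ge)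
      finally show "0 \<le> exp (- (1 + 2 * e) * enn2real (mean_measure M \<Phi> (P i))) \<and>
          exp (- (1 + 2 * e) * enn2real (mean_measure M \<Phi> (P i))) \<le> void_prob M \<Phi> (P i)" by simp
    qed
    also have "\<dots> \<le> void_prob M \<Phi> (\<Union>i<k. P i)" using void_prod_ge[OF assoc bP P(3)] .
    finally show ?thesis using P(4) by simp
  qed
  have lim: "(\<lambda>n. exp (- (1 + 2 * (inverse (real (Suc n)) / 2)) * a)) \<longlonglongrightarrow> exp (- (1 + 2 * (0 / 2)) * a)"
    by (intro tendsto_intros LIMSEQ_inverse_real_of_nat) auto
  have "exp (- (1 + 2 * (0 / 2)) * a) \<le> void_prob M \<Phi> B"
  proof (rule LIMSEQ_le_const2[OF lim], intro exI allI impI)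
    fix n :: nat
    have "inverse (real (Suc n)) \<le> 1" by (simp add: inverse_le_1_iff)
    thus "exp (- (1 + 2 * (inverse (real (Suc n)) / 2)) * a) \<le> void_prob M \<Phi> B"
      by (intro key) auto
  qed
  thus ?thesis by (simp add: a_def)
qed

end



lemma nat_fact_nonneg: "0 \<le> real (n::nat) * (real n - 1)"
  by (cases n) auto

lemma nat_fact_mono: "(m::nat) \<le> n \<Longrightarrow> real m * (real m - 1) \<le> real n * (real n - 1)"
proof (cases m)
  case 0 thus ?thesis using nat_fact_nonneg[of n] by simp
next
  case (Suc m')
  assume "m \<le> n"
  hence "real m \<le> real n" "0 \<le> real m" "0 \<le> real m - 1" using Suc by auto
  thus ?thesis by (intro mult_mono) auto
qed

lemma sum_sq_le:
  fixes x :: "'i \<Rightarrow> real"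
  assumes "finite A" "\<And>i. i \<in> A \<Longrightarrow> 0 \<le> x i"
  shows "(\<Sum>i\<in>A. x i * x i) \<le> (\<Sum>i\<in>A. x i) * (\<Sum>i\<in>A. x i)"
proof -
  have "(\<Sum>i\<in>A. x i * x i) \<le> (\<Sum>i\<in>A. \<Sum>j\<in>A. x i * x j)"
  proof (rule sum_mono)
    fix i assume i: "i \<in> A"
    show "x i * x i \<le> (\<Sum>j\<in>A. x i * x j)"
      using i assms by (intro member_le_sum[of i A "\<lambda>j. x i * x j"]) auto
  qed
  also have "\<dots> = (\<Sum>i\<in>A. x i) * (\<Sum>i\<in>A. x i)" by (simp add: sum_product)
  finally show ?thesis .
qed

lemma count_le1:
  assumes "finite (supp \<Phi> \<omega> P)" "\<forall>u\<in>supp \<Phi> \<omega> P. \<forall>v\<in>supp \<Phi> \<omega> P. u = v" "\<forall>x. \<Phi> \<omega> x \<le> 1"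
  shows "pp_count \<Phi> \<omega> P \<le> 1"
proof -
  have c: "card (supp \<Phi> \<omega> P) \<le> 1" using assms(1,2) card_le_Suc0_iff_eq by auto
  have "pp_count \<Phi> \<omega> P \<le> card (supp \<Phi> \<omega> P) * 1"
    unfolding pp_count_supp using sum_bounded_above[of "supp \<Phi> \<omega> P" "\<Phi> \<omega>" 1] assms(3) by simp
  thus ?thesis using c by simp
qed

context ppc begin

lemma g_int:
  assumes rf: "radon_fact2 M \<Phi>" and b: "bdd_borel B"
  shows "integrable M (\<lambda>\<omega>. real (pp_count \<Phi> \<omega> B) * (real (pp_count \<Phi> \<omega> B) - 1))"
proof (rule integrableI_bounded)
  show "(\<lambda>\<omega>. real (pp_count \<Phi> \<omega> B) * (real (pp_count \<Phi> \<omega> B) - 1)) \<in> borel_measurable M"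
    using b by (rule meas_real)
  have bb: "bdd_borel (B \<times> B)" using b by (auto simp: bdd_borel_def borel_Times bounded_Times)
  have "(\<integral>\<^sup>+\<omega>. ennreal (norm (real (pp_count \<Phi> \<omega> B) * (real (pp_count \<Phi> \<omega> B) - 1))) \<partial>M)
      = (\<integral>\<^sup>+\<omega>. of_nat (pp_count2 \<Phi> \<omega> (B \<times> B)) \<partial>M)"
  proof (rule nn_integral_cong)
    fix \<omega> assume "\<omega> \<in> space M"
    hence f: "finite (supp \<Phi> \<omega> B)" using fin b by (simp add: bdd_borel_def)
    show "ennreal (norm (real (pp_count \<Phi> \<omega> B) * (real (pp_count \<Phi> \<omega> B) - 1))) = of_nat (pp_count2 \<Phi> \<omega> (B \<times> B))"
      using pp_count2_eq[OF f] nat_fact_nonneg[of "pp_count \<Phi> \<omega> B"]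
      by (simp add: ennreal_of_nat_eq_real_of_nat)
  qed
  also have "\<dots> = fact_moment2 M \<Phi> (B \<times> B)" by (simp add: fact_moment2_def)
  also have "\<dots> < \<infinity>" using rf bb by (simp add: radon_fact2_def)
  finally show "(\<integral>\<^sup>+\<omega>. ennreal (norm (real (pp_count \<Phi> \<omega> B) * (real (pp_count \<Phi> \<omega> B) - 1))) \<partial>M) < \<infinity>" .
qed

lemma piece_int:
  assumes rf: "radon_fact2 M \<Phi>" and b: "bdd_borel B" and p: "bdd_borel P" "P \<subseteq> B"
  shows "integrable M (\<lambda>\<omega>. real (pp_count \<Phi> \<omega> P) * (real (pp_count \<Phi> \<omega> P) - 1))"
proof (rule Bochner_Integration.integrable_bound[OF g_int[OF rf b]])
  show "(\<lambda>\<omega>. real (pp_count \<Phi> \<omega> P) * (real (pp_count \<Phi> \<omega> P) - 1)) \<in> borel_measurable M"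
    using p(1) by (rule meas_real)
  show "AE \<omega> in M. norm (real (pp_count \<Phi> \<omega> P) * (real (pp_count \<Phi> \<omega> P) - 1))
      \<le> norm (real (pp_count \<Phi> \<omega> B) * (real (pp_count \<Phi> \<omega> B) - 1))"
  proof (rule AE_I2)
    fix \<omega> assume "\<omega> \<in> space M"
    hence f: "finite (supp \<Phi> \<omega> B)" using fin b by (simp add: bdd_borel_def)
    have "pp_count \<Phi> \<omega> P \<le> pp_count \<Phi> \<omega> B" by (rule pp_count_mono[OF f p(2)])
    thus "norm (real (pp_count \<Phi> \<omega> P) * (real (pp_count \<Phi> \<omega> P) - 1))
      \<le> norm (real (pp_count \<Phi> \<omega> B) * (real (pp_count \<Phi> \<omega> B) - 1))"
      using nat_fact_mono nat_fact_nonneg by (simp add: abs_of_nonneg)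
  qed
qed

lemma void_le:
  assumes p: "bdd_borel P"
    and i2: "integrable M (\<lambda>\<omega>. real (pp_count \<Phi> \<omega> P) * (real (pp_count \<Phi> \<omega> P) - 1))"
  shows "void_prob M \<Phi> P \<le> 1 - enn2real (mean_measure M \<Phi> P)
     + (\<integral>\<omega>. real (pp_count \<Phi> \<omega> P) * (real (pp_count \<Phi> \<omega> P) - 1) \<partial>M)"
proof -
  have i1: "integrable M (\<lambda>\<omega>. 1 - real (pp_count \<Phi> \<omega> P))"
    using p ps by (intro Bochner_Integration.integrable_diff integrable_N) (auto simp: prob_space_def finite_measure.integrable_const)
  have "(\<integral>\<omega>. indicator {\<omega>\<in>space M. pp_count \<Phi> \<omega> P = 0} \<omega> \<partial>M) \<le>
     (\<integral>\<omega>. ((1 - real (pp_count \<Phi> \<omega> P)) + real (pp_count \<Phi> \<omega> P) * (real (pp_count \<Phi> \<omega> P) - 1)) \<partial>M)"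
  proof (rule integral_mono)
    show "integrable M (indicat_real {\<omega> \<in> space M. pp_count \<Phi> \<omega> P = 0})" using p by (rule integrable_ind)
    show "integrable M (\<lambda>\<omega>. (1 - real (pp_count \<Phi> \<omega> P)) + real (pp_count \<Phi> \<omega> P) * (real (pp_count \<Phi> \<omega> P) - 1))"
      using i1 i2 by (rule Bochner_Integration.integrable_add)
    fix \<omega> assume "\<omega> \<in> space M"
    have sq: "0 \<le> (real (pp_count \<Phi> \<omega> P) - 1) * (real (pp_count \<Phi> \<omega> P) - 1)" by simp
    show "indicat_real {\<omega> \<in> space M. pp_count \<Phi> \<omega> P = 0} \<omega> \<le>
       (1 - real (pp_count \<Phi> \<omega> P)) + real (pp_count \<Phi> \<omega> P) * (real (pp_count \<Phi> \<omega> P) - 1)"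
    proof (cases "pp_count \<Phi> \<omega> P = 0")
      case True thus ?thesis using \<open>\<omega> \<in> space M\<close> by (simp add: indicator_def)
    next
      case False
      have "indicat_real {\<omega> \<in> space M. pp_count \<Phi> \<omega> P = 0} \<omega> = 0" using False by (simp add: indicator_def)
      moreover have "(1 - real (pp_count \<Phi> \<omega> P)) + real (pp_count \<Phi> \<omega> P) * (real (pp_count \<Phi> \<omega> P) - 1)
          = (real (pp_count \<Phi> \<omega> P) - 1) * (real (pp_count \<Phi> \<omega> P) - 1)" by (simp add: algebra_simps)
      ultimately show ?thesis using sq by simp
    qed
  qed
  also have "\<dots> = 1 - enn2real (mean_measure M \<Phi> P)
     + (\<integral>\<omega>. real (pp_count \<Phi> \<omega> P) * (real (pp_count \<Phi> \<omega> P) - 1) \<partial>M)"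
    using p ps i1 i2 by (simp add: Bochner_Integration.integral_add Bochner_Integration.integral_diff
        integrable_N integral_N prob_space_def finite_measure.integrable_const prob_space.prob_space)
  finally show ?thesis using p by (simp add: void_integral)
qed

end



context ppc begin

lemma part_i:
  assumes sp: "simple_pp M \<Phi>" and rf: "radon_fact2 M \<Phi>"
    and assoc: "\<forall>B1 B2. bdd_borel B1 \<longrightarrow> bdd_borel B2 \<longrightarrow> B1 \<inter> B2 = {} \<longrightarrow>
              void_prob2 M \<Phi> B1 B2 \<le> void_prob M \<Phi> B1 * void_prob M \<Phi> B2"
    and b: "bdd_borel B"
  shows "void_prob M \<Phi> B \<le> exp (- enn2real (mean_measure M \<Phi> B))"
proof -
  define a where "a = enn2real (mean_measure M \<Phi> B)"
  define \<rho> where "\<rho> = (\<lambda>n::nat. inverse (real (Suc n)))"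
  have \<rho>pos: "\<rho> n > 0" for n by (simp add: \<rho>_def)
  have \<rho>lim: "\<rho> \<longlonglongrightarrow> 0" unfolding \<rho>_def by (rule LIMSEQ_inverse_real_of_nat)
  have bB: "bounded B" "B \<in> sets borel" using b by (auto simp: bdd_borel_def)
  define Q where "Q = (\<lambda>n (k::nat) (P::nat \<Rightarrow> 'a set) (c::nat \<Rightarrow> 'a). (\<forall>i<k. P i \<subseteq> B \<inter> ball (c i) (\<rho> n / 2)) \<and> (\<forall>i<k. P i \<in> sets borel)
     \<and> (\<forall>i<k. \<forall>j<k. i \<noteq> j \<longrightarrow> P i \<inter> P j = {}) \<and> (\<Union>i<k. P i) = B)"
  have "\<forall>n. \<exists>(k::nat) P c. (\<forall>i<k. P i \<subseteq> B \<inter> ball (c i) (\<rho> n / 2)) \<and> (\<forall>i<k. P i \<in> sets borel)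
     \<and> (\<forall>i<k. \<forall>j<k. i \<noteq> j \<longrightarrow> P i \<inter> P j = {}) \<and> (\<Union>i<k. P i) = B"
  proof
    fix n
    have rp: "\<And>x::'a. (\<lambda>_. \<rho> n / 2) x > 0" using \<rho>pos[of n] by simp
    show "\<exists>(k::nat) P c. (\<forall>i<k. P i \<subseteq> B \<inter> ball (c i) (\<rho> n / 2)) \<and> (\<forall>i<k. P i \<in> sets borel)
     \<and> (\<forall>i<k. \<forall>j<k. i \<noteq> j \<longrightarrow> P i \<inter> P j = {}) \<and> (\<Union>i<k. P i) = B"
      using partition_exists[OF bB rp] by simp
  qed
  then have "\<forall>n. \<exists>(k::nat) P c. Q n k P c"
    unfolding Q_def by blast
  hence "\<exists>K PP CC. \<forall>n. Q n (K n) (PP n) (CC n)" by metis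
  then obtain K PP CC where PQ: "\<forall>n. Q n (K n) (PP n) (CC n)" by blast
  have PP: "\<forall>n. (\<forall>i<K n. PP n i \<subseteq> B \<inter> ball (CC n i) (\<rho> n / 2)) \<and> (\<forall>i<K n. PP n i \<in> sets borel)
     \<and> (\<forall>i<K n. \<forall>j<K n. i \<noteq> j \<longrightarrow> PP n i \<inter> PP n j = {}) \<and> (\<Union>i<K n. PP n i) = B"
    using PQ unfolding Q_def by blast
  have PPsub: "\<And>n i. i < K n \<Longrightarrow> PP n i \<subseteq> B" using PP by blast
  have PPball: "\<And>n i. i < K n \<Longrightarrow> PP n i \<subseteq> ball (CC n i) (\<rho> n / 2)" using PP by blast
  have PPdis: "\<And>n. \<forall>i<K n. \<forall>j<K n. i \<noteq> j \<longrightarrow> PP n i \<inter> PP n j = {}" using PP by blast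
  have PPun: "\<And>n. (\<Union>i<K n. PP n i) = B" using PP by blast
  have PPb: "\<And>n. \<forall>i<K n. bdd_borel (PP n i)"
  proof (intro allI impI)
    fix n i assume i: "i < K n"
    have "bounded (PP n i)" using PPsub[OF i] bB(1) bounded_subset by blast
    thus "bdd_borel (PP n i)" using PP i by (simp add: bdd_borel_def)
  qed
  define f where "f = (\<lambda>P \<omega>. real (pp_count \<Phi> \<omega> P) * (real (pp_count \<Phi> \<omega> P) - 1))"
  define h where "h = (\<lambda>n \<omega>. \<Sum>i<K n. f (PP n i) \<omega>)"
  have fint: "integrable M (f (PP n i))" if "i < K n" for n i
    unfolding f_def using piece_int[OF rf b] PPb PPsub that by blast
  have key: "void_prob M \<Phi> B \<le> exp (- a + (\<integral>\<omega>. h n \<omega> \<partial>M))" for n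
  proof -
    have "void_prob M \<Phi> B = void_prob M \<Phi> (\<Union>i<K n. PP n i)" using PPun by simp
    also have "\<dots> \<le> (\<Prod>i<K n. void_prob M \<Phi> (PP n i))" using void_prod_le[OF assoc PPb PPdis] .
    also have "\<dots> \<le> (\<Prod>i<K n. exp (- enn2real (mean_measure M \<Phi> (PP n i)) + (\<integral>\<omega>. f (PP n i) \<omega> \<partial>M)))"
    proof (rule prod_mono)
      fix i assume "i \<in> {..<K n}"
      hence i: "i < K n" by simp
      have "void_prob M \<Phi> (PP n i) \<le> 1 + (- enn2real (mean_measure M \<Phi> (PP n i)) + (\<integral>\<omega>. f (PP n i) \<omega> \<partial>M))"
        using void_le[of "PP n i"] PPb i fint[OF i] unfolding f_def by simp
      also have "\<dots> \<le> exp (- enn2real (mean_measure M \<Phi> (PP n i)) + (\<integral>\<omega>. f (PP n i) \<omega> \<partial>M))"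
        by (rule exp_ge_add_one_self)
      finally show "0 \<le> void_prob M \<Phi> (PP n i) \<and> void_prob M \<Phi> (PP n i) \<le> exp (- enn2real (mean_measure M \<Phi> (PP n i)) + (\<integral>\<omega>. f (PP n i) \<omega> \<partial>M))"
        using void_nonneg by simp
    qed
    also have "\<dots> = exp (\<Sum>i<K n. - enn2real (mean_measure M \<Phi> (PP n i)) + (\<integral>\<omega>. f (PP n i) \<omega> \<partial>M))"
      by (simp add: exp_sum)
    also have "(\<Sum>i<K n. - enn2real (mean_measure M \<Phi> (PP n i)) + (\<integral>\<omega>. f (PP n i) \<omega> \<partial>M))
        = - (\<Sum>i<K n. enn2real (mean_measure M \<Phi> (PP n i))) + (\<Sum>i<K n. (\<integral>\<omega>. f (PP n i) \<omega> \<partial>M))"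
      by (simp add: sum.distrib sum_negf sum_subtractf)
    also have "(\<Sum>i<K n. enn2real (mean_measure M \<Phi> (PP n i))) = a"
      unfolding a_def by (rule sum_alpha[OF PPb PPdis PPun])
    also have "(\<Sum>i<K n. (\<integral>\<omega>. f (PP n i) \<omega> \<partial>M)) = (\<integral>\<omega>. h n \<omega> \<partial>M)"
      unfolding h_def using fint by (intro Bochner_Integration.integral_sum[symmetric]) auto
    finally show ?thesis .
  qed
  have conv: "AE \<omega> in M. (\<lambda>n. h n \<omega>) \<longlonglongrightarrow> 0"
    using sp[unfolded simple_pp_def] AE_space
  proof eventually_elim
    case (elim \<omega>)
    hence s1: "\<forall>x. \<Phi> \<omega> x \<le> 1" and om: "\<omega> \<in> space M" by auto
    let ?S = "supp \<Phi> \<omega> B"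
    let ?T = "{p \<in> ?S \<times> ?S. fst p \<noteq> snd p}"
    have fS: "finite ?S" using fin[OF om] bB by simp
    have fT: "finite ?T" using fS by auto
    have "\<forall>p\<in>?T. eventually (\<lambda>n. \<rho> n < dist (fst p) (snd p)) sequentially"
    proof
      fix p assume "p \<in> ?T"
      hence "dist (fst p) (snd p) > 0" by simp
      thus "eventually (\<lambda>n. \<rho> n < dist (fst p) (snd p)) sequentially" using order_tendstoD(2)[OF \<rho>lim] by blast
    qed
    hence ev: "eventually (\<lambda>n. \<forall>p\<in>?T. \<rho> n < dist (fst p) (snd p)) sequentially"
      by (rule eventually_ball_finite[OF fT])
    have "eventually (\<lambda>n. h n \<omega> = 0) sequentially"
      using ev
    proof eventually_elim
      case (elim n)
      have "f (PP n i) \<omega> = 0" if i: "i < K n" for i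
      proof -
        have fP: "finite (supp \<Phi> \<omega> (PP n i))" using fin[OF om] PPb i by (simp add: bdd_borel_def)
        have "\<forall>u\<in>supp \<Phi> \<omega> (PP n i). \<forall>v\<in>supp \<Phi> \<omega> (PP n i). u = v"
        proof (intro ballI)
          fix u v assume u: "u \<in> supp \<Phi> \<omega> (PP n i)" and v: "v \<in> supp \<Phi> \<omega> (PP n i)"
          show "u = v"
          proof (rule ccontr)
            assume ne: "u \<noteq> v"
            have uS: "u \<in> ?S" "v \<in> ?S" using u v PPsub[OF i] by (auto simp: supp_def)
            hence "(u, v) \<in> ?T" using ne by simp
            hence lt: "\<rho> n < dist u v" using elim by fastforce
            have "u \<in> ball (CC n i) (\<rho> n / 2)" "v \<in> ball (CC n i) (\<rho> n / 2)"
              using u v PPball[OF i] by (auto simp: supp_def)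
            hence "dist u (CC n i) < \<rho> n / 2" "dist v (CC n i) < \<rho> n / 2" by (auto simp: dist_commute)
            hence "dist u v < \<rho> n" by (rule dist_triangle_half_l)
            thus False using lt by simp
          qed
        qed
        hence le1: "pp_count \<Phi> \<omega> (PP n i) \<le> 1" using count_le1[OF fP _ s1] by blast
        hence "pp_count \<Phi> \<omega> (PP n i) = 0 \<or> pp_count \<Phi> \<omega> (PP n i) = 1" by arith
        thus ?thesis unfolding f_def by auto
      qed
      thus ?case unfolding h_def by simp
    qed
    thus ?case by (rule tendsto_eventually)
  qed
  have lim: "(\<lambda>n. \<integral>\<omega>. h n \<omega> \<partial>M) \<longlonglongrightarrow> (\<integral>\<omega>. 0 \<partial>M)"
  proof (rule integral_dominated_convergence[where w = "f B"])
    show "(\<lambda>\<omega>. 0::real) \<in> borel_measurable M" by simp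
    show "h n \<in> borel_measurable M" for n
      unfolding h_def f_def using PPb by (intro borel_measurable_sum meas_real) auto
    show "integrable M (f B)" unfolding f_def using g_int[OF rf b] .
    show "AE \<omega> in M. (\<lambda>n. h n \<omega>) \<longlonglongrightarrow> 0" by (rule conv)
    show "AE \<omega> in M. norm (h n \<omega>) \<le> f B \<omega>" for n
    proof (rule AE_I2)
      fix \<omega> assume om: "\<omega> \<in> space M"
      let ?x = "\<lambda>i. real (pp_count \<Phi> \<omega> (PP n i))"
      have nn: "0 \<le> h n \<omega>" unfolding h_def f_def by (intro sum_nonneg nat_fact_nonneg)
      have sumx: "(\<Sum>i<K n. ?x i) = real (pp_count \<Phi> \<omega> B)"
      proof -
        have "pp_count \<Phi> \<omega> (\<Union>i<K n. PP n i) = (\<Sum>i<K n. pp_count \<Phi> \<omega> (PP n i))"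
          using PPb by (intro N_sum[OF om]) (auto simp: bdd_borel_def PPdis)
        thus ?thesis using PPun[of n] by simp
      qed
      have "h n \<omega> = (\<Sum>i<K n. ?x i * ?x i) - (\<Sum>i<K n. ?x i)"
        unfolding h_def f_def by (simp add: algebra_simps sum_subtractf)
      also have "\<dots> \<le> (\<Sum>i<K n. ?x i) * (\<Sum>i<K n. ?x i) - (\<Sum>i<K n. ?x i)"
        using sum_sq_le[of "{..<K n}" ?x] by simp
      also have "\<dots> = f B \<omega>" unfolding f_def sumx by (simp add: algebra_simps)
      finally show "norm (h n \<omega>) \<le> f B \<omega>" using nn by simp
    qed
  qed
  have lim2: "(\<lambda>n. exp (- a + (\<integral>\<omega>. h n \<omega> \<partial>M))) \<longlonglongrightarrow> exp (- a + 0)"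
    using lim by (intro tendsto_intros) simp
  have "void_prob M \<Phi> B \<le> exp (- a + 0)"
    by (rule LIMSEQ_le_const[OF lim2]) (use key in blast)
  thus ?thesis by (simp add: a_def)
qed

end


theorem proposition3p1:
  fixes M :: "'w measure" and \<Phi> :: "'w \<Rightarrow> 'a::euclidean_space \<Rightarrow> nat"
  assumes "point_process M \<Phi>" and "radon_mean M \<Phi>"
  shows "(simple_pp M \<Phi> \<and> radon_fact2 M \<Phi> \<and>
          (\<forall>B1 B2. bdd_borel B1 \<longrightarrow> bdd_borel B2 \<longrightarrow> B1 \<inter> B2 = {} \<longrightarrow>
              void_prob2 M \<Phi> B1 B2 \<le> void_prob M \<Phi> B1 * void_prob M \<Phi> B2)
          \<longrightarrow> (\<forall>B. bdd_borel B \<longrightarrow>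
                 void_prob M \<Phi> B \<le> exp (- enn2real (mean_measure M \<Phi> B))))
       \<and> (diffuse_mean M \<Phi> \<and>
          (\<forall>B1 B2. bdd_borel B1 \<longrightarrow> bdd_borel B2 \<longrightarrow> B1 \<inter> B2 = {} \<longrightarrow>
              void_prob2 M \<Phi> B1 B2 \<ge> void_prob M \<Phi> B1 * void_prob M \<Phi> B2)
          \<longrightarrow> (\<forall>B. bdd_borel B \<longrightarrow>
                 void_prob M \<Phi> B \<ge> exp (- enn2real (mean_measure M \<Phi> B))))"
proof -
  interpret ppc M \<Phi> using assms by unfold_locales
  show ?thesis
  proof (intro conjI impI allI)
    fix B :: "'a set" assume h: "simple_pp M \<Phi> \<and> radon_fact2 M \<Phi> \<and>
          (\<forall>B1 B2. bdd_borel B1 \<longrightarrow> bdd_borel B2 \<longrightarrow> B1 \<inter> B2 = {} \<longrightarrow>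
              void_prob2 M \<Phi> B1 B2 \<le> void_prob M \<Phi> B1 * void_prob M \<Phi> B2)"
      and b: "bdd_borel B"
    show "void_prob M \<Phi> B \<le> exp (- enn2real (mean_measure M \<Phi> B))"
      using part_i[OF _ _ _ b] h by blast
  next
    fix B :: "'a set" assume h: "diffuse_mean M \<Phi> \<and>
          (\<forall>B1 B2. bdd_borel B1 \<longrightarrow> bdd_borel B2 \<longrightarrow> B1 \<inter> B2 = {} \<longrightarrow>
              void_prob2 M \<Phi> B1 B2 \<ge> void_prob M \<Phi> B1 * void_prob M \<Phi> B2)"
      and b: "bdd_borel B"
    show "void_prob M \<Phi> B \<ge> exp (- enn2real (mean_measure M \<Phi> B))"
      using part_ii[OF _ _ b] h by blast
  qed
qed

end
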